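(* Let $A$ be a valuation ring with $2\in A^\times$, and let $[u_1,\dots,u_r]$ and $[v_1,\dots,v_s]$ be possibly empty frames in $\mathbb E^n_A$ spanning quadratic submodules $U$ and $V$ respectively. Then $U^\perp\cap V^\perp$ contains a non-singular subspace of dimension at least $n-r-2s$.
   Context: $\mathbb E^n_A=(A^n,q)$, $q(x)=x_1^2+\dots+x_n^2$, $B_q(x,y)=q(x+y)-q(x)-q(y)$. A unit vector is $v$ with $q(v)=1$; a frame is a finite set of unit vectors $w_i$ with $B_q(w_i,w_j)=0$ for $i\neq j$; $S^\perp=\{x:B_q(x,s)=0\ \forall s\in S\}$. A quadratic submodule is a direct summand with restricted form. A non-singular subspace of dimension $d$ means a free $A$-submodule $W$ of rank $d$ such that $x\mapsto B_q(x,-)|_W$ is an isomorphism $W\to\mathrm{Hom}_A(W,A)$. A valuation ring is a domain $A$ with fraction field $K$ such that $x\in A$ or $x^{-1}\in A$ for each $x\in K^\times$. *)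

theory Defs
  imports "HOL-Analysis.Analysis" "HOL-Computational_Algebra.Fraction_Field"
begin

definition valuation_ring :: "'a::idom itself \<Rightarrow> bool" where
  "valuation_ring _ \<longleftrightarrow>
     (\<forall>x::'a fract. x \<noteq> 0 \<longrightarrow>
        x \<in> range (\<lambda>a. Fract a 1) \<or> inverse x \<in> range (\<lambda>a. Fract a 1))"

definition qf :: "'a::comm_ring_1 ^ 'n::finite \<Rightarrow> 'a" where
  "qf x = (\<Sum>i\<in>UNIV. (x $ i)^2)"

definition Bq :: "'a::comm_ring_1 ^ 'n::finite \<Rightarrow> 'a ^ 'n \<Rightarrow> 'a" where
  "Bq x y = qf (x + y) - qf x - qf y"

definition unit_vector :: "'a::comm_ring_1 ^ 'n::finite \<Rightarrow> bool" where
  "unit_vector v \<longleftrightarrow> qf v = 1"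

definition is_frame :: "(nat \<Rightarrow> 'a::comm_ring_1 ^ 'n::finite) \<Rightarrow> nat \<Rightarrow> bool" where
  "is_frame u r \<longleftrightarrow> (\<forall>i<r. unit_vector (u i)) \<and>
     (\<forall>i<r. \<forall>j<r. i \<noteq> j \<longrightarrow> Bq (u i) (u j) = 0)"

definition lin_span :: "(nat \<Rightarrow> 'a::comm_ring_1 ^ 'n::finite) \<Rightarrow> nat \<Rightarrow> ('a ^ 'n) set" where
  "lin_span u r = {(\<Sum>i<r. c i *s u i) | c. True}"

definition perp :: "('a::comm_ring_1 ^ 'n::finite) set \<Rightarrow> ('a ^ 'n) set" where
  "perp S = {x. \<forall>s\<in>S. Bq x s = 0}"

definition is_submodule :: "('a::comm_ring_1 ^ 'n::finite) set \<Rightarrow> bool" where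
  "is_submodule W \<longleftrightarrow> 0 \<in> W \<and> (\<forall>x\<in>W. \<forall>y\<in>W. x + y \<in> W) \<and> (\<forall>c. \<forall>x\<in>W. c *s x \<in> W)"

definition free_of_rank :: "('a::comm_ring_1 ^ 'n::finite) set \<Rightarrow> nat \<Rightarrow> bool" where
  "free_of_rank W d \<longleftrightarrow> (\<exists>b. (\<forall>i<d. b i \<in> W) \<and> W = lin_span b d \<and>
      (\<forall>c. (\<Sum>i<d. c i *s b i) = 0 \<longrightarrow> (\<forall>i<d. c i = 0)))"

definition linear_form_on :: "('a::comm_ring_1 ^ 'n::finite) set \<Rightarrow> ('a ^ 'n \<Rightarrow> 'a) \<Rightarrow> bool" where
  "linear_form_on W f \<longleftrightarrow> (\<forall>x\<in>W. \<forall>y\<in>W. f (x + y) = f x + f y) \<and>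
     (\<forall>c. \<forall>x\<in>W. f (c *s x) = c * f x)"

text \<open>Non-singular subspace of dimension d: a free submodule W of rank d such that
  x |-> B_q(x,-)|_W is an isomorphism W -> Hom_A(W,A) (it is always A-linear, so
  isomorphism = bijective).\<close>
definition nonsingular_subspace :: "('a::comm_ring_1 ^ 'n::finite) set \<Rightarrow> nat \<Rightarrow> bool" where
  "nonsingular_subspace W d \<longleftrightarrow> is_submodule W \<and> free_of_rank W d \<and>
     inj_on (\<lambda>x. restrict (Bq x) W) W \<and>
     (\<forall>f. linear_form_on W f \<longrightarrow> (\<exists>x\<in>W. \<forall>y\<in>W. Bq x y = f y))"

end

theory Submission
  imports Defs
begin


lemma Bq_eq: "Bq x y = 2 * (\<Sum>i\<in>UNIV. x$i * y$i)"
  unfolding Bq_def qf_def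
  by (simp add: power2_eq_square algebra_simps sum.distrib sum_distrib_left flip: sum_subtractf)

lemma Bq_sym: "Bq x y = Bq y x"
  unfolding Bq_eq by (simp add: mult.commute)

lemma Bq_add1: "Bq (x + y) z = Bq x z + Bq y z"
  unfolding Bq_eq by (simp add: algebra_simps sum.distrib)

lemma Bq_add2: "Bq z (x + y) = Bq z x + Bq z y"
  unfolding Bq_eq by (simp add: algebra_simps sum.distrib)

lemma Bq_smult1: "Bq (c *s x) z = c * Bq x z"
  unfolding Bq_eq by (simp add: algebra_simps sum_distrib_left)

lemma Bq_smult2: "Bq z (c *s x) = c * Bq z x"
  unfolding Bq_eq by (simp add: algebra_simps sum_distrib_left)

lemma Bq_diff1: "Bq (x - y) z = Bq x z - Bq y z"
  unfolding Bq_eq by (simp add: algebra_simps sum_subtractf)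

lemma Bq_diff2: "Bq z (x - y) = Bq z x - Bq z y"
  unfolding Bq_eq by (simp add: algebra_simps sum_subtractf)

lemma Bq_zero1[simp]: "Bq 0 z = 0" and Bq_zero2[simp]: "Bq z 0 = 0"
  unfolding Bq_eq by simp_all

lemma Bq_sum1: "Bq (\<Sum>i\<in>I. c i *s b i) z = (\<Sum>i\<in>I. c i * Bq (b i) z)"
  by (induction I rule: infinite_finite_induct) (simp_all add: Bq_add1 Bq_smult1)

lemma Bq_sum2: "Bq z (\<Sum>i\<in>I. c i *s b i) = (\<Sum>i\<in>I. c i * Bq z (b i))"
  by (induction I rule: infinite_finite_induct) (simp_all add: Bq_add2 Bq_smult2)

definition sp :: "(nat \<Rightarrow> 'a::comm_ring_1 ^ 'n::finite) \<Rightarrow> nat set \<Rightarrow> ('a ^ 'n) set" where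
  "sp b I = {(\<Sum>i\<in>I. c i *s b i) | c. True}"

lemma lin_span_sp: "lin_span u r = sp u {..<r}"
  unfolding lin_span_def sp_def by simp

lemma sp_sub:
  assumes "is_submodule S" "\<forall>i\<in>I. b i \<in> S"
  shows "sp b I \<subseteq> S"
proof
  fix x assume "x \<in> sp b I"
  then obtain c where x: "x = (\<Sum>i\<in>I. c i *s b i)" unfolding sp_def by auto
  have "(\<Sum>i\<in>I. c i *s b i) \<in> S" using assms(2)
  proof (induction I rule: infinite_finite_induct)
    case (infinite A) then show ?case using assms(1) by (simp add: is_submodule_def)
  next
    case empty then show ?case using assms(1) by (simp add: is_submodule_def)
  next
    case (insert i F) then show ?case using assms(1) by (simp add: is_submodule_def)
  qed
  then show "x \<in> S" using x by simp
qed

lemma sp_submodule: "is_submodule (sp b I)"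
  unfolding is_submodule_def
proof (intro conjI ballI allI)
  show "0 \<in> sp b I" unfolding sp_def by (rule CollectI, rule exI[of _ "\<lambda>_. 0"]) simp
  fix x y assume "x \<in> sp b I" "y \<in> sp b I"
  then obtain c d where "x = (\<Sum>i\<in>I. c i *s b i)" "y = (\<Sum>i\<in>I. d i *s b i)" unfolding sp_def by auto
  then have "x + y = (\<Sum>i\<in>I. (c i + d i) *s b i)" by (simp add: sum.distrib vector_sadd_rdistrib)
  then show "x + y \<in> sp b I" unfolding sp_def by (intro CollectI exI[of _ "\<lambda>i. c i + d i"]) simp
next
  fix a x assume "x \<in> sp b I"
  then obtain c where "x = (\<Sum>i\<in>I. c i *s b i)" unfolding sp_def by auto
  then have "a *s x = (\<Sum>i\<in>I. (a * c i) *s b i)"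
    by (simp add: vec_eq_iff sum_distrib_left mult.assoc)
  then show "a *s x \<in> sp b I" unfolding sp_def by (intro CollectI exI[of _ "\<lambda>i. a * c i"]) simp
qed

lemma sp_gen: "i \<in> I \<Longrightarrow> finite I \<Longrightarrow> b i \<in> sp b I"
  unfolding sp_def
proof (rule CollectI, rule exI[of _ "\<lambda>j. if j = i then 1 else 0"], simp)
  assume "i \<in> I" "finite I"
  have "(\<Sum>j\<in>I. (if j = i then 1 else 0) *s b j) = (\<Sum>j\<in>I. if j = i then b j else 0)"
    by (rule sum.cong) auto
  also have "\<dots> = b i" using \<open>i \<in> I\<close> \<open>finite I\<close> by simp
  finally show "b i = (\<Sum>j\<in>I. (if j = i then 1 else 0) *s b j)" by simp
qed

lemma submod_sum: "is_submodule S \<Longrightarrow> \<forall>i\<in>(I::nat set). b i \<in> S \<Longrightarrow> (\<Sum>i\<in>I. c i *s b i) \<in> S"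
  using sp_sub[of S I b] unfolding sp_def by blast

lemma submod_diff: "is_submodule S \<Longrightarrow> x \<in> S \<Longrightarrow> y \<in> S \<Longrightarrow> x - y \<in> S"
proof -
  assume S: "is_submodule S" "x \<in> S" "y \<in> S"
  have "x - y = x + (-1) *s y" by (simp add: vec_eq_iff)
  then show ?thesis using S unfolding is_submodule_def by metis
qed



lemma dvd_total:
  assumes V: "valuation_ring TYPE('a::idom)"
  shows "(a::'a) dvd b \<or> b dvd a"
proof (cases "a = 0 \<or> b = 0")
  case True then show ?thesis by auto
next
  case False
  then have a: "a \<noteq> 0" and b: "b \<noteq> 0" by auto
  have nz: "Fract a b \<noteq> 0" using a b by (simp add: Zero_fract_def eq_fract)
  from V nz have "Fract a b \<in> range (\<lambda>x. Fract x 1) \<or> inverse (Fract a b) \<in> range (\<lambda>x. Fract x 1)"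
    unfolding valuation_ring_def by blast
  then show ?thesis
  proof
    assume "Fract a b \<in> range (\<lambda>x. Fract x 1)"
    then obtain c where "Fract a b = Fract c 1" by auto
    then have "a = c * b" using b by (simp add: eq_fract)
    then show ?thesis by auto
  next
    assume "inverse (Fract a b) \<in> range (\<lambda>x. Fract x 1)"
    then obtain c where "Fract b a = Fract c 1" by auto
    then have "b = c * a" using a by (simp add: eq_fract)
    then show ?thesis by auto
  qed
qed

lemma nonunit_add:
  assumes V: "valuation_ring TYPE('a::idom)"
  and "\<not> (x::'a) dvd 1" "\<not> y dvd 1"
  shows "\<not> (x + y) dvd 1"
proof
  assume u: "(x + y) dvd 1"
  from dvd_total[OF V, of x y] show False
  proof
    assume "x dvd y" then obtain t where "y = x * t" by auto
    then have "x + y = x * (1 + t)" by (simp add: algebra_simps)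
    then show False using u assms(2) by (metis dvd_mult_left)
  next
    assume "y dvd x" then obtain t where "x = y * t" by auto
    then have "x + y = y * (1 + t)" by (simp add: algebra_simps)
    then show False using u assms(3) by (metis dvd_mult_left)
  qed
qed

lemma unit_add_nonunit:
  assumes V: "valuation_ring TYPE('a::idom)"
  and "(x::'a) dvd 1" "\<not> y dvd 1"
  shows "(x + y) dvd 1"
proof (rule ccontr)
  assume "\<not> (x + y) dvd 1"
  moreover have "\<not> (- y) dvd 1" using assms(3) by simp
  ultimately have "\<not> (x + y + - y) dvd 1" using nonunit_add[OF V] by blast
  then show False using assms(2) by simp
qed

lemma nonunit_sum:
  assumes V: "valuation_ring TYPE('a::idom)"
  and "\<forall>i\<in>I. \<not> (f i :: 'a) dvd 1"
  shows "\<not> (\<Sum>i\<in>I. f i) dvd 1"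
  using assms(2)
proof (induction I rule: infinite_finite_induct)
  case (insert i F) then show ?case using nonunit_add[OF V] by simp
qed simp_all

lemma dvd_min:
  assumes V: "valuation_ring TYPE('a::idom)"
  and "finite I" "I \<noteq> {}"
  shows "\<exists>k\<in>I. \<forall>i\<in>I. (f k :: 'a) dvd f i"
  using assms(2,3)
proof (induction I rule: finite_ne_induct)
  case (singleton x) then show ?case by simp
next
  case (insert x F)
  then obtain k where k: "k \<in> F" "\<forall>i\<in>F. f k dvd f i" by auto
  from dvd_total[OF V, of "f k" "f x"] show ?case
  proof
    assume "f k dvd f x" then show ?thesis using k by auto
  next
    assume "f x dvd f k" then show ?thesis using k by (auto intro: dvd_trans)
  qed
qed



definition NS :: "(nat \<Rightarrow> 'a::comm_ring_1 ^ 'n::finite) \<Rightarrow> nat set \<Rightarrow> bool" where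
  "NS b I \<longleftrightarrow> finite I \<and> (\<forall>\<phi>. \<exists>y\<in>sp b I. \<forall>i\<in>I. Bq y (b i) = \<phi> i) \<and>
     (\<forall>z\<in>sp b I. (\<forall>i\<in>I. Bq z (b i) = 0) \<longrightarrow> z = 0)"

lemma perp1_submodule: "is_submodule {z. Bq z x = 0}"
  unfolding is_submodule_def by (simp add: Bq_add1 Bq_smult1)

lemma int_submodule: "is_submodule S \<Longrightarrow> is_submodule T \<Longrightarrow> is_submodule (S \<inter> T)"
  unfolding is_submodule_def by auto

lemma sp_Bq1: "z \<in> sp b I \<Longrightarrow> \<exists>c. z = (\<Sum>i\<in>I. c i *s b i)"
  unfolding sp_def by auto

lemma kill1:
  fixes b :: "nat \<Rightarrow> 'a::idom ^ 'n::finite"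
  assumes V: "valuation_ring TYPE('a)"
    and NS: "NS b I" and xin: "x \<in> sp b I" and Uu: "Bq x x dvd 1"
  shows "\<exists>j\<in>I. \<exists>g. NS g (I - {j}) \<and> sp g (I - {j}) = sp b I \<inter> {z. Bq z x = 0}"
proof -
  have fin: "finite I" using NS by (simp add: NS_def)
  obtain a where xa: "x = (\<Sum>i\<in>I. a i *s b i)" using sp_Bq1[OF xin] by auto
  define U where "U = Bq x x"
  have Uexp: "U = (\<Sum>i\<in>I. a i * Bq (b i) x)" unfolding U_def
    by (subst (1) xa) (rule Bq_sum1)
  have "\<exists>j\<in>I. a j dvd 1"
  proof (rule ccontr)
    assume "\<not> (\<exists>j\<in>I. a j dvd 1)"
    then have "\<forall>i\<in>I. \<not> (a i * Bq (b i) x) dvd 1" by (meson dvd_mult_left)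
    then have "\<not> (\<Sum>i\<in>I. a i * Bq (b i) x) dvd 1" by (rule nonunit_sum[OF V])
    then have "\<not> U dvd 1" using Uexp by simp
    then show False using Uu U_def by simp
  qed
  then obtain j where jI: "j \<in> I" and aj: "a j dvd 1" by blast
  obtain aj' where aj': "a j * aj' = 1" using aj by (metis dvd_def)
  obtain Ui where Ui: "U * Ui = 1" using Uu U_def by (metis dvd_def)
  have U0: "U \<noteq> 0" using Ui by auto
  define g where "g i = U *s b i - Bq (b i) x *s x" for i
  define J where "J = I - {j}"
  have bsp: "b i \<in> sp b I" if "i \<in> I" for i using sp_gen[OF that fin] .
  have gsp: "g i \<in> sp b I" if "i \<in> I" for i
    unfolding g_def using sp_submodule[of b I] bsp[OF that] xin
    by (metis is_submodule_def submod_diff)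
  have gx: "Bq (g i) x = 0" for i
    unfolding g_def U_def by (simp add: Bq_diff1 Bq_smult1 mult.commute)
  let ?P = "sp b I \<inter> {z. Bq z x = 0}"
  have Psub: "is_submodule ?P" by (rule int_submodule[OF sp_submodule perp1_submodule])
  have sub1: "sp g J \<subseteq> ?P"
    by (rule sp_sub[OF Psub]) (use gsp gx J_def in auto)
  have sub2: "?P \<subseteq> sp g J"
  proof
    fix z assume zP: "z \<in> ?P"
    define S where "S = {v + \<mu> *s x | v \<mu>. v \<in> sp g J}"
    have Ssub: "is_submodule S" unfolding is_submodule_def
    proof (intro conjI ballI allI)
      show "0 \<in> S" unfolding S_def using sp_submodule[of g J]
        by (intro CollectI exI[of _ 0] exI[of _ "0::'a"]) (simp add: is_submodule_def)
    next
      fix y1 y2 assume "y1 \<in> S" "y2 \<in> S"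
      then obtain v1 m1 v2 m2 where "y1 = v1 + m1 *s x" "v1 \<in> sp g J" "y2 = v2 + m2 *s x" "v2 \<in> sp g J"
        unfolding S_def by blast
      moreover then have "y1 + y2 = (v1 + v2) + (m1 + m2) *s x" "v1 + v2 \<in> sp g J"
        using sp_submodule[of g J] by (auto simp: vec_eq_iff algebra_simps is_submodule_def)
      ultimately show "y1 + y2 \<in> S" unfolding S_def by blast
    next
      fix c y1 assume "y1 \<in> S"
      then obtain v1 m1 where "y1 = v1 + m1 *s x" "v1 \<in> sp g J"
        unfolding S_def by blast
      moreover then have "c *s y1 = (c *s v1) + (c * m1) *s x" "c *s v1 \<in> sp g J"
        using sp_submodule[of g J] by (auto simp: vec_eq_iff algebra_simps is_submodule_def)
      ultimately show "c *s y1 \<in> S" unfolding S_def by blast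
    qed
    have xS: "x \<in> S" unfolding S_def using sp_submodule[of g J]
      by (intro CollectI exI[of _ 0] exI[of _ "1::'a"]) (simp add: is_submodule_def)
    have bS: "b i \<in> S" if "i \<in> J" for i
    proof -
      have gJ: "g i \<in> sp g J" using sp_gen[OF that] fin J_def by auto
      have "b i = Ui *s g i + (Ui * Bq (b i) x) *s x"
        unfolding g_def using Ui by (simp add: vec_eq_iff algebra_simps)
      then show ?thesis unfolding S_def using gJ sp_submodule[of g J]
        by (intro CollectI exI[of _ "Ui *s g i"] exI[of _ "Ui * Bq (b i) x"]) (simp add: is_submodule_def)
    qed
    have bjS: "b j \<in> S"
    proof -
      have "x = (\<Sum>i\<in>J. a i *s b i) + a j *s b j"
        unfolding xa J_def using fin jI by (simp add: sum.remove add.commute)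
      then have eq: "b j = aj' *s (x - (\<Sum>i\<in>J. a i *s b i))"
        using aj' by (simp add: vec_eq_iff algebra_simps)
      have "(\<Sum>i\<in>J. a i *s b i) \<in> S" using submod_sum[OF Ssub] bS by blast
      then have "x - (\<Sum>i\<in>J. a i *s b i) \<in> S" using submod_diff[OF Ssub xS] by blast
      then have "aj' *s (x - (\<Sum>i\<in>J. a i *s b i)) \<in> S" using Ssub unfolding is_submodule_def by blast
      then show ?thesis using eq by metis
    qed
    have "sp b I \<subseteq> S" by (rule sp_sub[OF Ssub]) (use bS bjS J_def in blast)
    then obtain v \<mu> where z: "z = v + \<mu> *s x" "v \<in> sp g J" using zP unfolding S_def by blast
    have "Bq v x = 0" using sub1 z(2) by auto
    then have "\<mu> * U = 0" using zP z(1) by (simp add: Bq_add1 Bq_smult1 U_def)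
    then have "\<mu> = 0" using U0 by simp
    then show "z \<in> sp g J" using z by simp
  qed
  have speq: "sp g J = ?P" using sub1 sub2 by blast
  have "NS g J" unfolding NS_def
  proof (intro conjI allI ballI impI)
    show "finite J" using fin J_def by simp
  next
    fix \<phi> :: "nat \<Rightarrow> 'a"
    define \<psi> where "\<psi> i = (if i = j then - aj' * (\<Sum>l\<in>J. a l * (Ui * \<phi> l)) else Ui * \<phi> i)" for i
    obtain y where y: "y \<in> sp b I" "\<forall>i\<in>I. Bq y (b i) = \<psi> i" using NS unfolding NS_def by blast
    have "Bq y x = (\<Sum>i\<in>I. a i * Bq y (b i))" unfolding xa by (rule Bq_sum2)
    also have "\<dots> = (\<Sum>i\<in>J. a i * \<psi> i) + a j * \<psi> j"
      using y(2) fin jI J_def by (simp add: sum.remove add.commute)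
    also have "(\<Sum>i\<in>J. a i * \<psi> i) = (\<Sum>l\<in>J. a l * (Ui * \<phi> l))"
      by (rule sum.cong) (auto simp: \<psi>_def J_def)
    also have "a j * \<psi> j = - (a j * aj') * (\<Sum>l\<in>J. a l * (Ui * \<phi> l))"
      by (simp add: \<psi>_def)
    finally have yx: "Bq y x = 0" using aj' by simp
    have "y \<in> sp g J" using speq y(1) yx by auto
    moreover have "\<forall>i\<in>J. Bq y (g i) = \<phi> i"
      using y(2) yx Ui J_def by (auto simp: g_def Bq_diff2 Bq_smult2 \<psi>_def)
    ultimately show "\<exists>y\<in>sp g J. \<forall>i\<in>J. Bq y (g i) = \<phi> i" by blast
  next
    fix z assume zJ: "z \<in> sp g J" and h: "\<forall>i\<in>J. Bq z (g i) = 0"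
    have zP: "z \<in> ?P" using zJ speq by simp
    then have zx: "Bq z x = 0" by simp
    have zb: "Bq z (b i) = 0" if "i \<in> J" for i
    proof -
      have "0 = Bq z (g i)" using h that by simp
      also have "\<dots> = U * Bq z (b i)" using zx by (simp add: g_def Bq_diff2 Bq_smult2)
      finally show ?thesis using U0 by simp
    qed
    have "Bq z x = (\<Sum>i\<in>I. a i * Bq z (b i))" unfolding xa by (rule Bq_sum2)
    also have "\<dots> = (\<Sum>i\<in>J. a i * Bq z (b i)) + a j * Bq z (b j)"
      using fin jI J_def by (simp add: sum.remove add.commute)
    also have "(\<Sum>i\<in>J. a i * Bq z (b i)) = 0" using zb by simp
    finally have "a j * Bq z (b j) = 0" using zx by simp
    then have "Bq z (b j) = 0" using aj' by (metis mult_zero_left mult_eq_0_iff one_neq_zero)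
    then have "\<forall>i\<in>I. Bq z (b i) = 0" using zb J_def by blast
    then show "z = 0" using NS zP unfolding NS_def by blast
  qed
  then show ?thesis using jI speq J_def by blast
qed



lemma unit_nz: "(c::'a::idom) dvd 1 \<Longrightarrow> c \<noteq> 0" by auto

lemma kill2:
  fixes b :: "nat \<Rightarrow> 'a::idom ^ 'n::finite"
  assumes V: "valuation_ring TYPE('a)" and two: "(2::'a) dvd 1"
    and NS: "NS b I"
  shows "\<exists>b' I'. NS b' I' \<and> sp b' I' \<subseteq> sp b I \<inter> {x. Bq x w = 0} \<and> int (card I') \<ge> int (card I) - 2"
proof -
  have fin: "finite I" using NS by (simp add: NS_def)
  define \<beta> where "\<beta> i = Bq (b i) w" for i
  show ?thesis
  proof (cases "\<forall>i\<in>I. \<beta> i = 0")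
    case True
    have "sp b I \<subseteq> {x. Bq x w = 0}" by (rule sp_sub[OF perp1_submodule]) (use True \<beta>_def in auto)
    then show ?thesis using NS by (intro exI[of _ b] exI[of _ I]) auto
  next
    case False
    then have Ine: "I \<noteq> {}" by auto
    obtain k where kI: "k \<in> I" and kmin: "\<forall>i\<in>I. \<beta> k dvd \<beta> i" using dvd_min[OF V fin Ine] by blast
    have bk0: "\<beta> k \<noteq> 0" using False kmin by auto
    define \<gamma> where "\<gamma> i = (SOME t. \<beta> i = \<beta> k * t)" for i
    have bg: "\<beta> i = \<beta> k * \<gamma> i" if "i \<in> I" for i
    proof -
      have "\<exists>t. \<beta> i = \<beta> k * t" using kmin that by (auto simp: dvd_def)
      then show ?thesis unfolding \<gamma>_def by (rule someI_ex)
    qed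
    have gk: "\<gamma> k = 1"
    proof -
      have "\<beta> k * 1 = \<beta> k * \<gamma> k" using bg[OF kI] by simp
      then show ?thesis using bk0 by (simp only: mult_cancel_left) simp
    qed
    obtain y0 where y0: "y0 \<in> sp b I" "\<forall>i\<in>I. Bq y0 (b i) = \<gamma> i" using NS unfolding NS_def by blast
    have key: "Bq x w = 0" if "x \<in> sp b I" "Bq x y0 = 0" for x
    proof -
      have sm: "is_submodule {x. Bq x w = \<beta> k * Bq x y0}"
        unfolding is_submodule_def by (simp add: Bq_add1 Bq_smult1 algebra_simps)
      have "sp b I \<subseteq> {x. Bq x w = \<beta> k * Bq x y0}"
        by (rule sp_sub[OF sm]) (use bg y0(2) \<beta>_def Bq_sym[of _ y0] in auto)
      then show ?thesis using that by auto
    qed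
    define a where "a = Bq y0 y0"
    show ?thesis
    proof (cases "a dvd 1")
      case True
      obtain j g where j: "j \<in> I" "NS g (I - {j})" "sp g (I - {j}) = sp b I \<inter> {z. Bq z y0 = 0}"
        using kill1[OF V NS y0(1)] True a_def by blast
      have "sp g (I - {j}) \<subseteq> sp b I \<inter> {x. Bq x w = 0}" using j(3) key by auto
      moreover have "int (card (I - {j})) \<ge> int (card I) - 2" using j(1) fin by simp
      ultimately show ?thesis using j(2) by blast
    next
      case anu: False
      define p where "p = b k"
      define e where "e = Bq p p"
      have psp: "p \<in> sp b I" using sp_gen[OF kI fin] p_def by simp
      have py: "Bq p y0 = 1" "Bq y0 p = 1" using y0(2) kI gk p_def Bq_sym by metis+
      have "\<exists>z. z \<in> sp b I \<and> Bq z z dvd 1 \<and> a * Bq z z - (Bq y0 z)^2 = a * e - 1"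
      proof (cases "e dvd 1")
        case True then show ?thesis using psp py e_def by (intro exI[of _ p]) simp
      next
        case False
        have zsp: "p + y0 \<in> sp b I" using psp y0(1) sp_submodule[of b I] by (simp add: is_submodule_def)
        have zz: "Bq (p + y0) (p + y0) = 2 + (e + a)"
          using py by (simp add: Bq_add1 Bq_add2 e_def a_def)
        have yz: "Bq y0 (p + y0) = 1 + a" using py by (simp add: Bq_add2 a_def)
        have "\<not> (e + a) dvd 1" using nonunit_add[OF V False anu] .
        then have "(2 + (e + a)) dvd 1" using unit_add_nonunit[OF V two] by blast
        moreover have "a * (2 + (e + a)) - (1 + a)^2 = a * e - 1"
          by (simp add: power2_eq_square algebra_simps)
        ultimately show ?thesis using zsp zz yz by (intro exI[of _ "p + y0"]) simp
      qed
      then obtain z where z: "z \<in> sp b I" "Bq z z dvd 1" "a * Bq z z - (Bq y0 z)^2 = a * e - 1" by blast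
      have aeu: "(a * e - 1) dvd 1"
      proof -
        have "\<not> (a * e) dvd 1" using anu by (meson dvd_mult_left)
        then have "((-1) + a * e) dvd 1" using unit_add_nonunit[OF V, of "-1"] by simp
        then show ?thesis by simp
      qed
      obtain j1 g1 where j1: "j1 \<in> I" "NS g1 (I - {j1})" "sp g1 (I - {j1}) = sp b I \<inter> {x. Bq x z = 0}"
        using kill1[OF V NS z(1) z(2)] by blast
      define c where "c = Bq z z"
      define d where "d = Bq y0 z"
      define y' where "y' = c *s y0 - d *s z"
      have y'sp: "y' \<in> sp b I" unfolding y'_def using y0(1) z(1) sp_submodule[of b I]
        by (metis is_submodule_def submod_diff)
      have y'z: "Bq y' z = 0" unfolding y'_def c_def d_def by (simp add: Bq_diff1 Bq_smult1 mult.commute)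
      have y'1: "y' \<in> sp g1 (I - {j1})" using j1(3) y'sp y'z by simp
      have "Bq y' y' = c * (c * a - d * d)"
        unfolding y'_def by (simp add: Bq_diff1 Bq_diff2 Bq_smult1 Bq_smult2 a_def d_def c_def Bq_sym[of z y0] algebra_simps)
      also have "\<dots> = c * (a * c - d^2)" by (simp add: power2_eq_square algebra_simps)
      finally have "Bq y' y' = c * (a * e - 1)" using z(3) c_def d_def by simp
      then have y'u: "Bq y' y' dvd 1" using z(2) aeu c_def by (metis mult_dvd_mono mult_1)
      obtain j2 g2 where j2: "j2 \<in> I - {j1}" "NS g2 (I - {j1} - {j2})"
          "sp g2 (I - {j1} - {j2}) = sp g1 (I - {j1}) \<inter> {x. Bq x y' = 0}"
        using kill1[OF V j1(2) y'1 y'u] by blast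
      have "sp g2 (I - {j1} - {j2}) \<subseteq> sp b I \<inter> {x. Bq x w = 0}"
      proof
        fix x assume "x \<in> sp g2 (I - {j1} - {j2})"
        then have x: "x \<in> sp b I" "Bq x z = 0" "Bq x y' = 0" using j2(3) j1(3) by auto
        have "Bq x y' = c * Bq x y0" using x(2) unfolding y'_def by (simp add: Bq_diff2 Bq_smult2)
        then have "Bq x y0 = 0" using x(3) z(2) c_def by auto
        then show "x \<in> sp b I \<inter> {x. Bq x w = 0}" using key x(1) by simp
      qed
      moreover have "int (card (I - {j1} - {j2})) \<ge> int (card I) - 2" using j1(1) j2(1) fin by simp
      ultimately show ?thesis using j2(2) by blast
    qed
  qed
qed



lemma sp_reindex:
  assumes h: "bij_betw h J I"
  shows "sp (b \<circ> h) J = sp b I"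
proof
  show "sp (b \<circ> h) J \<subseteq> sp b I"
  proof
    fix x assume "x \<in> sp (b \<circ> h) J"
    then obtain c where x: "x = (\<Sum>k\<in>J. c k *s b (h k))" unfolding sp_def by auto
    define c' where "c' = c \<circ> inv_into J h"
    have "(\<Sum>i\<in>I. c' i *s b i) = (\<Sum>k\<in>J. c' (h k) *s b (h k))"
      using sum.reindex_bij_betw[OF h, of "\<lambda>i. c' i *s b i"] by simp
    also have "\<dots> = x" unfolding x c'_def
      by (rule sum.cong) (use h in \<open>auto simp: bij_betw_def\<close>)
    finally show "x \<in> sp b I" unfolding sp_def by (intro CollectI exI[of _ c']) simp
  qed
next
  show "sp b I \<subseteq> sp (b \<circ> h) J"
  proof
    fix x assume "x \<in> sp b I"
    then obtain c where x: "x = (\<Sum>i\<in>I. c i *s b i)" unfolding sp_def by auto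
    have "x = (\<Sum>k\<in>J. c (h k) *s b (h k))"
      using sum.reindex_bij_betw[OF h, of "\<lambda>i. c i *s b i"] x by simp
    then show "x \<in> sp (b \<circ> h) J" unfolding sp_def by (intro CollectI exI[of _ "c \<circ> h"]) simp
  qed
qed

lemma NS_reindex:
  assumes h: "bij_betw h J I" and NS: "NS b I" and fJ: "finite J"
  shows "NS (b \<circ> h) J"
  unfolding NS_def sp_reindex[OF h]
proof (intro conjI allI ballI impI)
  show "finite J" by fact
next
  fix \<phi> :: "nat \<Rightarrow> 'a"
  obtain y where y: "y \<in> sp b I" "\<forall>i\<in>I. Bq y (b i) = (\<phi> \<circ> inv_into J h) i"
    using NS unfolding NS_def by blast
  have "\<forall>k\<in>J. Bq y ((b \<circ> h) k) = \<phi> k"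
    using y(2) h by (auto simp: bij_betw_def)
  then show "\<exists>y\<in>sp b I. \<forall>i\<in>J. Bq y ((b \<circ> h) i) = \<phi> i" using y(1) by blast
next
  fix z assume z: "z \<in> sp b I" "\<forall>i\<in>J. Bq z ((b \<circ> h) i) = 0"
  then have "\<forall>i\<in>I. Bq z (b i) = 0" using h by (auto simp: bij_betw_def)
  then show "z = 0" using NS z(1) unfolding NS_def by blast
qed

lemma lin_sum:
  assumes "linear_form_on W f" "is_submodule W" "\<forall>i\<in>(I::nat set). b i \<in> W"
  shows "f (\<Sum>i\<in>I. c i *s b i) = (\<Sum>i\<in>I. c i * f (b i))"
proof -
  have W0: "0 \<in> W" using assms(2) by (simp add: is_submodule_def)
  have f0: "f 0 = 0"
  proof -
    have "f (0 + 0) = f 0 + f 0" using assms(1) W0 unfolding linear_form_on_def by blast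
    then show ?thesis by simp
  qed
  show ?thesis using assms(3)
  proof (induction I rule: infinite_finite_induct)
    case (infinite A) then show ?case using f0 by simp
  next
    case empty then show ?case using f0 by simp
  next
    case (insert i F)
    have s: "(\<Sum>i\<in>F. c i *s b i) \<in> W" using submod_sum[OF assms(2)] insert.prems by auto
    have bi: "c i *s b i \<in> W" using assms(2) insert.prems by (simp add: is_submodule_def)
    have "f (\<Sum>i\<in>insert i F. c i *s b i) = f (c i *s b i + (\<Sum>i\<in>F. c i *s b i))"
      using insert by simp
    also have "\<dots> = f (c i *s b i) + f (\<Sum>i\<in>F. c i *s b i)"
      using assms(1) s bi unfolding linear_form_on_def by blast
    also have "f (c i *s b i) = c i * f (b i)" using assms(1) insert.prems unfolding linear_form_on_def by blast
    finally show ?case using insert by simp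
  qed
qed

lemma ns_nonsingular:
  assumes NS: "NS b {..<d}"
  shows "nonsingular_subspace (sp b {..<d}) d"
proof -
  let ?W = "sp b {..<d}"
  have bW: "\<forall>i<d. b i \<in> ?W" by (auto intro: sp_gen)
  have Wsub: "is_submodule ?W" by (rule sp_submodule)
  have free: "free_of_rank ?W d" unfolding free_of_rank_def
  proof (intro exI[of _ b] conjI allI impI)
    show "\<And>i. i < d \<Longrightarrow> b i \<in> ?W" using bW by blast
    show "?W = lin_span b d" by (simp add: lin_span_sp)
  next
    fix c l assume c: "(\<Sum>i<d. c i *s b i) = 0" and l: "l < d"
    have "\<forall>\<phi>. \<exists>y\<in>?W. \<forall>i\<in>{..<d}. Bq y (b i) = \<phi> i" using NS unfolding NS_def by blast
    from spec[OF this, of "\<lambda>i. if i = l then 1 else 0"]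
    obtain y where y: "y \<in> ?W" "\<forall>i\<in>{..<d}. Bq y (b i) = (if i = l then 1 else 0)"
      by blast
    have "0 = Bq y (\<Sum>i<d. c i *s b i)" using c by simp
    also have "\<dots> = (\<Sum>i<d. c i * Bq y (b i))" by (rule Bq_sum2)
    also have "\<dots> = (\<Sum>i<d. if i = l then c i else 0)" by (rule sum.cong) (use y in auto)
    also have "\<dots> = c l" using l by simp
    finally show "c l = 0" by simp
  qed
  have inj: "inj_on (\<lambda>x. restrict (Bq x) ?W) ?W"
  proof (rule inj_onI)
    fix x x' assume x: "x \<in> ?W" "x' \<in> ?W" and eq: "restrict (Bq x) ?W = restrict (Bq x') ?W"
    have "\<forall>i\<in>{..<d}. Bq (x - x') (b i) = 0"
    proof
      fix i assume "i \<in> {..<d}"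
      then have "Bq x (b i) = Bq x' (b i)" using eq bW by (metis lessThan_iff restrict_apply')
      then show "Bq (x - x') (b i) = 0" by (simp add: Bq_diff1)
    qed
    moreover have "x - x' \<in> ?W" using submod_diff[OF Wsub x] .
    ultimately have "x - x' = 0" using NS unfolding NS_def by blast
    then show "x = x'" by simp
  qed
  have lf: "\<forall>f. linear_form_on ?W f \<longrightarrow> (\<exists>x\<in>?W. \<forall>y\<in>?W. Bq x y = f y)"
  proof (intro allI impI)
    fix f assume f: "linear_form_on ?W f"
    have "\<forall>\<phi>. \<exists>y\<in>?W. \<forall>i\<in>{..<d}. Bq y (b i) = \<phi> i" using NS unfolding NS_def by blast
    from spec[OF this, of "\<lambda>i. f (b i)"]
    obtain y where y: "y \<in> ?W" "\<forall>i\<in>{..<d}. Bq y (b i) = f (b i)"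
      by blast
    have "\<forall>z\<in>?W. Bq y z = f z"
    proof
      fix z assume "z \<in> ?W"
      then obtain c where z: "z = (\<Sum>i<d. c i *s b i)" unfolding sp_def by auto
      have "Bq y z = (\<Sum>i<d. c i * Bq y (b i))" unfolding z by (rule Bq_sum2)
      also have "\<dots> = (\<Sum>i<d. c i * f (b i))" using y(2) by simp
      also have "\<dots> = f z" unfolding z by (rule lin_sum[OF f Wsub, symmetric]) (use bW in auto)
      finally show "Bq y z = f z" .
    qed
    then show "\<exists>x\<in>?W. \<forall>z\<in>?W. Bq x z = f z" using y(1) by blast
  qed
  show ?thesis unfolding nonsingular_subspace_def using Wsub free inj lf by blast
qed



lemma Bq_axis: "Bq x (axis j 1) = 2 * (x $ j :: 'a::comm_ring_1)"
proof -
  have "(\<Sum>m\<in>UNIV. x$m * axis j 1 $ m) = (\<Sum>m\<in>UNIV. if m = j then x$m else 0)"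
    by (rule sum.cong) (auto simp: axis_def)
  then show ?thesis by (simp add: Bq_eq)
qed

lemma Bq_self: "Bq x x = 2 * qf x"
  by (simp add: Bq_eq qf_def power2_eq_square)

lemma std_NS:
  fixes dummy :: "'a::idom ^ 'n::finite"
  assumes two: "(2::'a) dvd 1"
  shows "\<exists>b :: nat \<Rightarrow> 'a ^ 'n. NS b {..<CARD('n)} \<and> sp b {..<CARD('n)} = UNIV"
proof -
  obtain h where h: "bij_betw h {0..<CARD('n)} (UNIV :: 'n set)"
    using ex_bij_betw_nat_finite[of "UNIV :: 'n set"] by auto
  have h': "bij_betw h {..<CARD('n)} (UNIV :: 'n set)" using h by (simp add: atLeast0LessThan)
  obtain t where t: "2 * t = (1::'a)" using two by (metis dvd_def)
  define b :: "nat \<Rightarrow> 'a ^ 'n" where "b k = axis (h k) 1" for k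
  let ?I = "{..<CARD('n)}"
  have spU: "sp b ?I = UNIV"
  proof (intro set_eqI iffI)
    fix x :: "'a ^ 'n"
    have "x = (\<Sum>i\<in>UNIV. x$i *s axis i 1)" by (simp add: basis_expansion)
    also have "\<dots> = (\<Sum>k\<in>?I. x$(h k) *s b k)"
      unfolding b_def using sum.reindex_bij_betw[OF h', of "\<lambda>i. x$i *s axis i 1"] by simp
    finally show "x \<in> sp b ?I" unfolding sp_def by (intro CollectI exI[of _ "\<lambda>k. x$(h k)"]) simp
  qed simp
  have inj: "inj_on h ?I" using h' by (simp add: bij_betw_def)
  have "NS b ?I" unfolding NS_def
  proof (intro conjI allI ballI impI)
    show "finite ?I" by simp
  next
    fix \<phi> :: "nat \<Rightarrow> 'a"
    define y where "y = (\<Sum>k\<in>?I. (t * \<phi> k) *s b k)"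
    have "\<forall>l\<in>?I. Bq y (b l) = \<phi> l"
    proof
      fix l assume l: "l \<in> ?I"
      have "Bq y (b l) = (\<Sum>k\<in>?I. (t * \<phi> k) * Bq (b k) (b l))" unfolding y_def by (rule Bq_sum1)
      also have "\<dots> = (\<Sum>k\<in>?I. if k = l then \<phi> l else 0)"
      proof (rule sum.cong)
        fix k assume k: "k \<in> ?I"
        have "Bq (b k) (b l) = 2 * (if k = l then 1 else 0)"
          unfolding b_def Bq_axis using inj k l by (auto simp: axis_def inj_on_def)
        then show "(t * \<phi> k) * Bq (b k) (b l) = (if k = l then \<phi> l else 0)"
          using t by (simp add: algebra_simps)
      qed simp
      also have "\<dots> = \<phi> l" using l by simp
      finally show "Bq y (b l) = \<phi> l" .
    qed
    then show "\<exists>y\<in>sp b ?I. \<forall>i\<in>?I. Bq y (b i) = \<phi> i" using spU by blast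
  next
    fix z :: "'a ^ 'n" assume "\<forall>i\<in>?I. Bq z (b i) = 0"
    then have "\<forall>k\<in>?I. z $ (h k) = 0" unfolding b_def Bq_axis using t
      by (metis mult_eq_0_iff one_neq_zero mult_zero_left)
    then show "z = 0" using h' unfolding vec_eq_iff bij_betw_def by (metis UNIV_I imageE zero_index)
  qed
  then show ?thesis using spU by blast
qed

lemma phaseU:
  fixes u :: "nat \<Rightarrow> 'a::idom ^ 'n::finite"
  assumes V: "valuation_ring TYPE('a)" and two: "(2::'a) dvd 1" and fr: "is_frame u r"
  shows "k \<le> r \<Longrightarrow> \<exists>b I. NS b I \<and> sp b I = {x. \<forall>i<k. Bq x (u i) = 0} \<and> card I + k = CARD('n)"
proof (induction k)
  case 0
  obtain b :: "nat \<Rightarrow> 'a ^ 'n" where "NS b {..<CARD('n)} \<and> sp b {..<CARD('n)} = UNIV"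
    using std_NS[OF two] by blast
  then show ?case by (intro exI[of _ b] exI[of _ "{..<CARD('n)}"]) auto
next
  case (Suc k)
  then obtain b I where bI: "NS b I" "sp b I = {x. \<forall>i<k. Bq x (u i) = 0}" "card I + k = CARD('n)"
    by auto
  have uk: "u k \<in> sp b I" using fr Suc.prems unfolding bI(2) is_frame_def by auto
  have uu: "Bq (u k) (u k) dvd 1" using fr Suc.prems two unfolding is_frame_def unit_vector_def Bq_self
    by auto
  obtain j g where j: "j \<in> I" "NS g (I - {j})" "sp g (I - {j}) = sp b I \<inter> {z. Bq z (u k) = 0}"
    using kill1[OF V bI(1) uk uu] by blast
  have fin: "finite I" using bI(1) by (simp add: NS_def)
  have "sp g (I - {j}) = {x. \<forall>i<Suc k. Bq x (u i) = 0}" using j(3) bI(2) less_Suc_eq by auto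
  moreover have "card (I - {j}) + Suc k = CARD('n)" using j(1) fin bI(3)
    by (simp add: card_Diff_singleton) (metis Suc_pred card_gt_0_iff empty_iff add_Suc_right add_Suc)
  ultimately show ?case using j(2) by blast
qed

lemma phaseV:
  fixes u v :: "nat \<Rightarrow> 'a::idom ^ 'n::finite"
  assumes V: "valuation_ring TYPE('a)" and two: "(2::'a) dvd 1" and fr: "is_frame u r"
  shows "\<exists>b I. NS b I \<and> sp b I \<subseteq> {x. \<forall>i<r. Bq x (u i) = 0} \<inter> {x. \<forall>i<k. Bq x (v i) = 0}
      \<and> int (card I) \<ge> int CARD('n) - int r - 2 * int k"
proof (induction k)
  case 0
  obtain b I where "NS b I" "sp b I = {x. \<forall>i<r. Bq x (u i) = 0}" "card I + r = CARD('n)"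
    using phaseU[OF V two fr, of r] by auto
  then show ?case by (intro exI[of _ b] exI[of _ I]) auto
next
  case (Suc k)
  then obtain b I where bI: "NS b I" "sp b I \<subseteq> {x. \<forall>i<r. Bq x (u i) = 0} \<inter> {x. \<forall>i<k. Bq x (v i) = 0}"
      "int (card I) \<ge> int CARD('n) - int r - 2 * int k"
    by auto
  obtain b' I' where b': "NS b' I'" "sp b' I' \<subseteq> sp b I \<inter> {x. Bq x (v k) = 0}"
      "int (card I') \<ge> int (card I) - 2"
    using kill2[OF V two bI(1), of "v k"] by blast
  have "sp b' I' \<subseteq> {x. \<forall>i<r. Bq x (u i) = 0} \<inter> {x. \<forall>i<Suc k. Bq x (v i) = 0}"
    using b'(2) bI(2) less_Suc_eq by auto
  moreover have "int (card I') \<ge> int CARD('n) - int r - 2 * int (Suc k)" using b'(3) bI(3) by simp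
  ultimately show ?case using b'(1) by (intro exI[of _ b'] exI[of _ I'] conjI)
qed

theorem lemma2p9:
  fixes u v :: "nat \<Rightarrow> 'a::idom ^ 'n::finite"
    and r s :: nat
  assumes "valuation_ring TYPE('a)"
    and "(2::'a) dvd 1"
    and "is_frame u r"
    and "is_frame v s"
  shows "\<exists>W d. W \<subseteq> perp (lin_span u r) \<inter> perp (lin_span v s) \<and>
           nonsingular_subspace W d \<and>
           int d \<ge> int CARD('n) - int r - 2 * int s"
proof -
  obtain b I where bI: "NS b I" "sp b I \<subseteq> {x. \<forall>i<r. Bq x (u i) = 0} \<inter> {x. \<forall>i<s. Bq x (v i) = 0}"
      "int (card I) \<ge> int CARD('n) - int r - 2 * int s"
    using phaseV[OF assms(1,2,3), of s v] by blast
  have fin: "finite I" using bI(1) by (simp add: NS_def)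
  obtain h where h: "bij_betw h {0..<card I} I" using ex_bij_betw_nat_finite[OF fin] by auto
  have h': "bij_betw h {..<card I} I" using h by (simp add: atLeast0LessThan)
  have NS': "NS (b \<circ> h) {..<card I}" using NS_reindex[OF h' bI(1)] by simp
  have speq: "sp (b \<circ> h) {..<card I} = sp b I" by (rule sp_reindex[OF h'])
  have perp: "{x. \<forall>i<m. Bq x (w i) = 0} \<subseteq> perp (lin_span w m)" for w :: "nat \<Rightarrow> 'a ^ 'n" and m
  proof
    fix x assume x: "x \<in> {x. \<forall>i<m. Bq x (w i) = 0}"
    have "Bq x y = 0" if yin: "y \<in> lin_span w m" for y
    proof -
      obtain c where y: "y = (\<Sum>i<m. c i *s w i)" using yin sp_Bq1[of y w "{..<m}"] unfolding lin_span_sp by blast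
      have "Bq x y = (\<Sum>i<m. c i * Bq x (w i))" unfolding y by (rule Bq_sum2)
      also have "\<dots> = 0" using x by simp
      finally show ?thesis .
    qed
    then show "x \<in> perp (lin_span w m)" unfolding perp_def by auto
  qed
  show ?thesis
  proof (intro exI[of _ "sp (b \<circ> h) {..<card I}"] exI[of _ "card I"] conjI)
    show "sp (b \<circ> h) {..<card I} \<subseteq> perp (lin_span u r) \<inter> perp (lin_span v s)"
      unfolding speq using bI(2) perp[of r u] perp[of s v] by (meson Int_mono subset_trans)
    show "nonsingular_subspace (sp (b \<circ> h) {..<card I}) (card I)" by (rule ns_nonsingular[OF NS'])
    show "int (card I) \<ge> int CARD('n) - int r - 2 * int s" by (rule bI(3))
  qed
qed

end
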